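(* In the single-hop model described in the context, $$P_s\le 1-(pq+1-p)^{D+1},\qquad\text{where } q:=P(SIR_1<\beta).$$
   Context: Single-hop model. Fix $\alpha>2$, $\beta>0$, $d>0$, $p\in(0,1]$, $\lambda>0$ and an integer $D\ge 0$. Let $\Phi$ be a homogeneous Poisson point process on $\mathbb{R}^2$ of intensity $\lambda$ (the same realization in every time slot); the typical receiver is at the origin and its transmitter at distance $d$. For each time slot $t\in\{1,2,\dots\}$ and each $x\in\Phi$ let $\mathbf 1_{x,t}\sim\mathrm{Bernoulli}(p)$, $G_{x,t}\sim\mathrm{Exp}(1)$, $H_t\sim\mathrm{Exp}(1)$, and $A_t\sim\mathrm{Bernoulli}(p)$, all mutually independent and independent of $\Phi$. Define $SIR_t:=\dfrac{d^{-\alpha}H_t}{\sum_{x\in\Phi}\mathbf 1_{x,t}|x|^{-\alpha}G_{x,t}}$ and $P_s:=P(\exists\, t\le D+1:\ A_t=1,\ SIR_t\ge\beta)$. *)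

theory Defs
  imports "HOL-Probability.Probability"
begin

text \<open>Points of the PPP are given by a (random) enumeration X n, n :: nat, of the
  points of \<Phi> in the plane (real^2).  Counting measure of \<Phi> on a set B.\<close>

definition pp_count :: "(nat \<Rightarrow> 'w \<Rightarrow> real^2) \<Rightarrow> (real^2) set \<Rightarrow> 'w \<Rightarrow> nat" where
  "pp_count X B \<omega> = card {n. X n \<omega> \<in> B}"

definition poisson_pp :: "'w measure \<Rightarrow> real \<Rightarrow> (nat \<Rightarrow> 'w \<Rightarrow> real^2) \<Rightarrow> bool" where
  "poisson_pp M lam X \<longleftrightarrow>
     (\<forall>n. X n \<in> borel_measurable M) \<and>
     (\<forall>B \<in> sets lborel. bounded B \<longrightarrow>
        (\<forall>k::nat. measure M {\<omega> \<in> space M. finite {n. X n \<omega> \<in> B} \<and> pp_count X B \<omega> = k}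
           = exp (- (lam * measure lborel B)) * (lam * measure lborel B) ^ k / fact k)) \<and>
     (\<forall>(J::nat set) B. finite J \<longrightarrow> disjoint_family_on B J \<longrightarrow>
        (\<forall>j\<in>J. B j \<in> sets lborel \<and> bounded (B j)) \<longrightarrow>
        prob_space.indep_vars M (\<lambda>_. count_space UNIV) (\<lambda>j. pp_count X (B j)) J)"

datatype mark_idx = MInd nat nat | MG nat nat | MH nat | MA nat

definition mark_vec ::
  "(nat \<Rightarrow> nat \<Rightarrow> 'w \<Rightarrow> bool) \<Rightarrow> (nat \<Rightarrow> nat \<Rightarrow> 'w \<Rightarrow> real) \<Rightarrow> (nat \<Rightarrow> 'w \<Rightarrow> real)
     \<Rightarrow> (nat \<Rightarrow> 'w \<Rightarrow> bool) \<Rightarrow> mark_idx \<Rightarrow> 'w \<Rightarrow> real" where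
  "mark_vec Ind G H A i \<omega> = (case i of
       MInd n t \<Rightarrow> of_bool (Ind n t \<omega>)
     | MG n t \<Rightarrow> G n t \<omega>
     | MH t \<Rightarrow> H t \<omega>
     | MA t \<Rightarrow> of_bool (A t \<omega>))"

definition indep_rv :: "'w measure \<Rightarrow> 'a measure \<Rightarrow> ('w \<Rightarrow> 'a) \<Rightarrow> 'b measure \<Rightarrow> ('w \<Rightarrow> 'b) \<Rightarrow> bool" where
  "indep_rv M Ma Y Mb Z \<longleftrightarrow> Y \<in> measurable M Ma \<and> Z \<in> measurable M Mb \<and>
     prob_space.indep_set M {Y -` S \<inter> space M | S. S \<in> sets Ma} {Z -` S \<inter> space M | S. S \<in> sets Mb}"

definition bernoulli_rv :: "'w measure \<Rightarrow> real \<Rightarrow> ('w \<Rightarrow> bool) \<Rightarrow> bool" where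
  "bernoulli_rv M p Y \<longleftrightarrow> Y \<in> measurable M (count_space UNIV) \<and>
     measure M {\<omega> \<in> space M. Y \<omega>} = p"

definition exp1_rv :: "'w measure \<Rightarrow> ('w \<Rightarrow> real) \<Rightarrow> bool" where
  "exp1_rv M Y \<longleftrightarrow> distributed M lborel Y (exponential_density 1)"

definition interference ::
  "real \<Rightarrow> (nat \<Rightarrow> 'w \<Rightarrow> real^2) \<Rightarrow> (nat \<Rightarrow> nat \<Rightarrow> 'w \<Rightarrow> bool) \<Rightarrow> (nat \<Rightarrow> nat \<Rightarrow> 'w \<Rightarrow> real)
     \<Rightarrow> nat \<Rightarrow> 'w \<Rightarrow> ennreal" where
  "interference \<alpha> X Ind G t \<omega> =
     (\<Sum>n. ennreal (of_bool (Ind n t \<omega>) * norm (X n \<omega>) powr (- \<alpha>) * G n t \<omega>))"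

definition SIR ::
  "real \<Rightarrow> real \<Rightarrow> (nat \<Rightarrow> 'w \<Rightarrow> real^2) \<Rightarrow> (nat \<Rightarrow> nat \<Rightarrow> 'w \<Rightarrow> bool) \<Rightarrow> (nat \<Rightarrow> nat \<Rightarrow> 'w \<Rightarrow> real)
     \<Rightarrow> (nat \<Rightarrow> 'w \<Rightarrow> real) \<Rightarrow> nat \<Rightarrow> 'w \<Rightarrow> ennreal" where
  "SIR \<alpha> d X Ind G H t \<omega> = ennreal (d powr (- \<alpha>) * H t \<omega>) / interference \<alpha> X Ind G t \<omega>"

end

theory Submission
  imports Defs
begin

fun slotof :: "mark_idx \<Rightarrow> nat" where
  "slotof (MInd n s) = s" | "slotof (MG n s) = s" | "slotof (MH s) = s" | "slotof (MA s) = s"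

definition sws :: "nat \<Rightarrow> nat \<Rightarrow> nat" where
  "sws t s = (if s = 1 then t else if s = t then 1 else s)"

fun sw :: "nat \<Rightarrow> mark_idx \<Rightarrow> mark_idx" where
  "sw t (MInd n s) = MInd n (sws t s)" | "sw t (MG n s) = MG n (sws t s)"
| "sw t (MH s) = MH (sws t s)" | "sw t (MA s) = MA (sws t s)"

lemma sws_sws[simp]: "sws t (sws t s) = s" by (auto simp: sws_def)
lemma sw_sw[simp]: "sw t (sw t i) = i" by (cases i) auto
lemma bij_sw: "bij (sw t)" by (metis bijI' sw_sw)

definition sirf :: "real \<Rightarrow> real \<Rightarrow> nat \<Rightarrow> (nat \<Rightarrow> real^2) \<Rightarrow> (mark_idx \<Rightarrow> real) \<Rightarrow> ennreal" where
  "sirf \<alpha> d t x m = ennreal (d powr (- \<alpha>) * m (MH t)) /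
     (\<Sum>n. ennreal (m (MInd n t) * norm (x n) powr (- \<alpha>) * m (MG n t)))"

lemma sirf_sw: "sirf \<alpha> d t x m = sirf \<alpha> d 1 x (\<lambda>i. m (sw t i))"
  by (simp add: sirf_def sws_def)

lemma sirf_cong: "(\<And>i. slotof i = t \<Longrightarrow> i \<noteq> MA t \<Longrightarrow> m i = m' i) \<Longrightarrow> sirf \<alpha> d t x m = sirf \<alpha> d t x m'"
  unfolding sirf_def by simp

lemma sirf_measurable:
  assumes [measurable]: "\<And>n. (\<lambda>\<omega>. xx \<omega> n) \<in> borel_measurable N"
    and mm: "\<And>i. slotof i = t \<Longrightarrow> i \<noteq> MA t \<Longrightarrow> (\<lambda>\<omega>. mm \<omega> i) \<in> borel_measurable N"
  shows "(\<lambda>\<omega>. sirf \<alpha> d t (xx \<omega>) (mm \<omega>)) \<in> borel_measurable N"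
proof -
  have [measurable]: "(\<lambda>\<omega>. mm \<omega> (MH t)) \<in> borel_measurable N"
     "\<And>n. (\<lambda>\<omega>. mm \<omega> (MInd n t)) \<in> borel_measurable N"
     "\<And>n. (\<lambda>\<omega>. mm \<omega> (MG n t)) \<in> borel_measurable N"
    by (auto intro: mm)
  show ?thesis unfolding sirf_def by measurable
qed

lemma tangent_pow:
  fixes x a :: real assumes "0 \<le> x" "0 \<le> a"
  shows "a ^ n + real n * a ^ (n - 1) * (x - a) \<le> x ^ n"
proof (induction n)
  case 0 then show ?case by simp
next
  case (Suc n)
  have "a ^ Suc n + real (Suc n) * a ^ n * (x - a) \<le> x * (a ^ n + real n * a ^ (n - 1) * (x - a))"
  proof (cases n)
    case 0 then show ?thesis by (simp add: algebra_simps)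
  next
    case (Suc k)
    have "0 \<le> real n * a ^ k * ((x - a) * (x - a))" using assms by (intro mult_nonneg_nonneg zero_le_square) auto
    then show ?thesis using Suc by (simp add: algebra_simps power2_eq_square)
  qed
  also have "\<dots> \<le> x * x ^ n" using Suc.IH assms by (intro mult_left_mono) auto
  finally show ?case by simp
qed

lemma (in prob_space) pow_expectation_le:
  fixes g :: "'a \<Rightarrow> real"
  assumes g[measurable]: "g \<in> borel_measurable M" and b: "\<And>x. x \<in> space M \<Longrightarrow> 0 \<le> g x \<and> g x \<le> 1"
  shows "(expectation g) ^ n \<le> expectation (\<lambda>x. g x ^ n)"
proof -
  define a where "a = expectation g"
  have ig: "integrable M g"
    using b by (intro integrable_const_bound[where B=1]) (auto intro!:)
  have a0: "0 \<le> a" unfolding a_def using b by (intro integral_nonneg_AE) (auto intro!:)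
  have ign: "integrable M (\<lambda>x. g x ^ n)"
    using b by (intro integrable_const_bound[where B=1]) (auto intro!: power_le_one)
  have "expectation (\<lambda>x. a ^ n + real n * a ^ (n - 1) * (g x - a)) \<le> expectation (\<lambda>x. g x ^ n)"
  proof (rule integral_mono)
    show "integrable M (\<lambda>x. a ^ n + real n * a ^ (n - 1) * (g x - a))" using ig by simp
    show "integrable M (\<lambda>x. g x ^ n)" by (rule ign)
    fix x assume "x \<in> space M" then show "a ^ n + real n * a ^ (n - 1) * (g x - a) \<le> g x ^ n"
      using b a0 tangent_pow by blast
  qed
  moreover have "expectation (\<lambda>x. a ^ n + real n * a ^ (n - 1) * (g x - a)) = a ^ n"
    using ig by (simp add: a_def prob_space)
  ultimately show ?thesis by (simp add: a_def)
qed

lemma (in prob_space) bern_vimage: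
  assumes Y: "bernoulli_rv M p Y" and Y': "bernoulli_rv M p Y'"
  shows "emeasure M ((\<lambda>\<omega>. of_bool (Y \<omega>) :: real) -` S \<inter> space M)
       = emeasure M ((\<lambda>\<omega>. of_bool (Y' \<omega>) :: real) -` S \<inter> space M)"
proof -
  have [measurable]: "Y \<in> measurable M (count_space UNIV)" "Y' \<in> measurable M (count_space UNIV)"
    using Y Y' by (auto simp: bernoulli_rv_def)
  have pY: "prob {\<omega> \<in> space M. Y \<omega>} = p" "prob {\<omega> \<in> space M. Y' \<omega>} = p"
    using Y Y' by (auto simp: bernoulli_rv_def)
  have nY: "prob {\<omega> \<in> space M. \<not> Y \<omega>} = 1 - p" "prob {\<omega> \<in> space M. \<not> Y' \<omega>} = 1 - p"
  proof -
    have "{\<omega> \<in> space M. \<not> Y \<omega>} = space M - {\<omega> \<in> space M. Y \<omega>}"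
         "{\<omega> \<in> space M. \<not> Y' \<omega>} = space M - {\<omega> \<in> space M. Y' \<omega>}" by auto
    then show "prob {\<omega> \<in> space M. \<not> Y \<omega>} = 1 - p" "prob {\<omega> \<in> space M. \<not> Y' \<omega>} = 1 - p"
      using prob_compl[of "{\<omega> \<in> space M. Y \<omega>}"] prob_compl[of "{\<omega> \<in> space M. Y' \<omega>}"] pY
      by auto
  qed
  have e: "\<And>Z. (\<lambda>\<omega>. of_bool (Z \<omega>) :: real) -` S \<inter> space M =
     (if 1 \<in> S then (if 0 \<in> S then space M else {\<omega> \<in> space M. Z \<omega>})
      else (if 0 \<in> S then {\<omega> \<in> space M. \<not> Z \<omega>} else {}))"
    by (auto simp: of_bool_def split: if_splits)
  show ?thesis
    unfolding e by (auto simp: emeasure_eq_measure pY nY)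
qed

lemma (in prob_space) bern_distr_eq:
  assumes "bernoulli_rv M p Y" "bernoulli_rv M p Y'"
  shows "distr M borel (\<lambda>\<omega>. of_bool (Y \<omega>) :: real) = distr M borel (\<lambda>\<omega>. of_bool (Y' \<omega>))"
proof -
  have [measurable]: "Y \<in> measurable M (count_space UNIV)" "Y' \<in> measurable M (count_space UNIV)"
    using assms by (auto simp: bernoulli_rv_def)
  show ?thesis
    by (rule measure_eqI) (auto simp: emeasure_distr bern_vimage[OF assms])
qed

lemma exp1_distr_eq:
  assumes "exp1_rv M Y" "exp1_rv M Y'"
  shows "distr M borel Y = distr M borel Y'"
proof -
  have "distr M borel Y = distr M lborel Y" "distr M borel Y' = distr M lborel Y'"
    by (auto intro!: distr_cong)
  then show ?thesis using assms by (simp add: exp1_rv_def distributed_def)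
qed

theorem proposition3:
  fixes M :: "'w measure"
    and \<alpha> \<beta> d p lam :: real and D :: nat
    and X :: "nat \<Rightarrow> 'w \<Rightarrow> real^2"
    and Ind :: "nat \<Rightarrow> nat \<Rightarrow> 'w \<Rightarrow> bool"
    and G :: "nat \<Rightarrow> nat \<Rightarrow> 'w \<Rightarrow> real"
    and H :: "nat \<Rightarrow> 'w \<Rightarrow> real"
    and A :: "nat \<Rightarrow> 'w \<Rightarrow> bool"
  assumes "prob_space M"
    and "\<alpha> > 2" and "\<beta> > 0" and "d > 0" and "0 < p" and "p \<le> 1" and "lam > 0"
    and "poisson_pp M lam X"
    and Indb: "\<And>n t. bernoulli_rv M p (Ind n t)"
    and Ge: "\<And>n t. exp1_rv M (G n t)"
    and He: "\<And>t. exp1_rv M (H t)"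
    and Ab: "\<And>t. bernoulli_rv M p (A t)"
    and indm: "prob_space.indep_vars M (\<lambda>_. borel) (mark_vec Ind G H A) UNIV"
    and indxm: "indep_rv M (PiM UNIV (\<lambda>_. borel)) (\<lambda>\<omega> n. X n \<omega>)
           (PiM UNIV (\<lambda>_. borel)) (\<lambda>\<omega> i. mark_vec Ind G H A i \<omega>)"
  shows "measure M {\<omega> \<in> space M. \<exists>t \<in> {1..D+1}. A t \<omega> \<and> SIR \<alpha> d X Ind G H t \<omega> \<ge> ennreal \<beta>}
         \<le> 1 - (p * measure M {\<omega> \<in> space M. SIR \<alpha> d X Ind G H 1 \<omega> < ennreal \<beta>} + 1 - p) ^ (D + 1)"
proof -
  interpret prob_space M by fact
  define mk where "mk = mark_vec Ind G H A"
  define Xv where "Xv = (\<lambda>\<omega> n. X n \<omega>)"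
  define mv where "mv = (\<lambda>\<omega> i. mk i \<omega>)"
  define PX :: "(nat \<Rightarrow> real^2) measure" where "PX = PiM UNIV (\<lambda>_. borel)"
  define PK :: "(mark_idx \<Rightarrow> real) measure" where "PK = PiM UNIV (\<lambda>_. borel)"
  define NX where "NX = distr M PX Xv"
  define NM where "NM = distr M PK mv"
  have spPX[simp]: "space PX = UNIV" by (simp add: PX_def space_PiM)
  have spPK[simp]: "space PK = UNIV" by (simp add: PK_def space_PiM)
  have mk_m[measurable]: "\<And>i. mk i \<in> borel_measurable M"
    using indm unfolding mk_def indep_vars_def by auto
  have Xv_m[measurable]: "Xv \<in> measurable M PX" and mv_m[measurable]: "mv \<in> measurable M PK"
    using indxm unfolding indep_rv_def Xv_def mv_def mk_def PX_def PK_def by auto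
  have ind_xm: "indep_set {Xv -` S \<inter> space M | S. S \<in> sets PX} {mv -` S \<inter> space M | S. S \<in> sets PK}"
    using indxm unfolding indep_rv_def Xv_def mv_def mk_def PX_def PK_def by auto
  interpret NX: prob_space NX unfolding NX_def by (rule prob_space_distr) simp
  interpret NM: prob_space NM unfolding NM_def by (rule prob_space_distr) simp
  have setsNX[measurable_cong]: "sets NX = sets PX" by (simp add: NX_def)
  have setsNM[measurable_cong]: "sets NM = sets PK" by (simp add: NM_def)
  have joint: "NX \<Otimes>\<^sub>M NM = distr M (PX \<Otimes>\<^sub>M PK) (\<lambda>\<omega>. (Xv \<omega>, mv \<omega>))"
  proof (rule pair_measure_eqI)
    show "sigma_finite_measure NX" "sigma_finite_measure NM" by unfold_locales
    show "sets (NX \<Otimes>\<^sub>M NM) = sets (distr M (PX \<Otimes>\<^sub>M PK) (\<lambda>\<omega>. (Xv \<omega>, mv \<omega>)))"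
      using sets_pair_measure_cong[OF setsNX setsNM] by simp
    fix S T assume S: "S \<in> sets NX" and T: "T \<in> sets NM"
    then have S': "S \<in> sets PX" and T': "T \<in> sets PK" by (simp_all add: setsNX setsNM)
    have "emeasure (distr M (PX \<Otimes>\<^sub>M PK) (\<lambda>\<omega>. (Xv \<omega>, mv \<omega>))) (S \<times> T)
        = emeasure M ((Xv -` S \<inter> space M) \<inter> (mv -` T \<inter> space M))"
      using S' T' by (subst emeasure_distr) (auto intro!: arg_cong[where f="emeasure M"])
    also have "\<dots> = ennreal (prob (Xv -` S \<inter> space M) * prob (mv -` T \<inter> space M))"
    proof -
      have "prob ((Xv -` S \<inter> space M) \<inter> (mv -` T \<inter> space M)) = prob (Xv -` S \<inter> space M) * prob (mv -` T \<inter> space M)"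
        by (rule indep_setD[OF ind_xm]) (use S' T' in blast)+
      then show ?thesis by (simp add: emeasure_eq_measure)
    qed
    also have "\<dots> = emeasure NX S * emeasure NM T"
      using S' T' by (simp add: NX_def NM_def emeasure_distr emeasure_eq_measure ennreal_mult)
    finally show "emeasure NX S * emeasure NM T = emeasure (distr M (PX \<Otimes>\<^sub>M PK) (\<lambda>\<omega>. (Xv \<omega>, mv \<omega>))) (S \<times> T)" ..
  qed
  have setsP: "sets (NX \<Otimes>\<^sub>M NM) = sets (PX \<Otimes>\<^sub>M PK)"
    using sets_pair_measure_cong[OF setsNX setsNM] .
  have secm: "(\<lambda>x. measure NM (Pair x -` S)) \<in> borel_measurable NX" if S: "S \<in> sets (PX \<Otimes>\<^sub>M PK)" for S
  proof -
    have "(\<lambda>x. emeasure NM (Pair x -` S)) \<in> borel_measurable NX"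
      using S setsP by (intro NM.measurable_emeasure_Pair) simp
    then show ?thesis unfolding measure_def by measurable
  qed
  have fub: "prob {\<omega> \<in> space M. (Xv \<omega>, mv \<omega>) \<in> S} = (\<integral>x. measure NM (Pair x -` S) \<partial>NX)"
    if S: "S \<in> sets (PX \<Otimes>\<^sub>M PK)" for S
  proof -
    have "prob {\<omega> \<in> space M. (Xv \<omega>, mv \<omega>) \<in> S} = measure (NX \<Otimes>\<^sub>M NM) S"
      unfolding joint using S by (subst measure_distr) (auto intro!: arg_cong[where f=prob])
    also have "\<dots> = enn2real (\<integral>\<^sup>+x. emeasure NM (Pair x -` S) \<partial>NX)"
      using S setsP by (simp add: measure_def NM.emeasure_pair_measure_alt)
    also have "(\<integral>\<^sup>+x. emeasure NM (Pair x -` S) \<partial>NX) = (\<integral>\<^sup>+x. ennreal (measure NM (Pair x -` S)) \<partial>NX)"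
      by (simp add: NM.emeasure_eq_measure)
    also have "\<dots> = ennreal (\<integral>x. measure NM (Pair x -` S) \<partial>NX)"
      using secm[OF S]
      by (intro nn_integral_eq_integral NX.integrable_const_bound[where B=1]) auto
    finally show ?thesis by simp
  qed
  define \<mu> where "\<mu> i = distr M borel (mk i)" for i
  have NM_Pi: "NM = PiM UNIV \<mu>"
    using indep_vars_iff_distr_eq_PiM[where I=UNIV and M'="\<lambda>_. borel" and X=mk] indm
    by (simp add: NM_def PK_def mv_def \<mu>_def[abs_def] mk_def[symmetric] restrict_UNIV)
  have \<mu>_prob: "prob_space (\<mu> i)" for i unfolding \<mu>_def by (rule prob_space_distr) simp
  have \<mu>_sets: "sets (\<mu> i) = sets borel" for i by (simp add: \<mu>_def)
  have \<mu>_sw: "\<mu> (sw t i) = \<mu> i" for t i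
    by (cases i) (auto simp: \<mu>_def mk_def mark_vec_def[abs_def] intro: bern_distr_eq[OF Indb Indb]
        bern_distr_eq[OF Ab Ab] exp1_distr_eq[OF Ge Ge] exp1_distr_eq[OF He He])
  have swm: "(\<lambda>m i. m (sw t i)) \<in> measurable PK PK" for t
    unfolding PK_def by (rule measurable_PiM_single') (auto simp: space_PiM)
  have DE: "distr M PK (\<lambda>\<omega> i. mv \<omega> (sw t i)) = NM" for t
  proof -
    have "distr M PK (\<lambda>\<omega> i. mv \<omega> (sw t i)) = distr NM PK (\<lambda>m i. m (sw t i))"
      unfolding NM_def by (subst distr_distr[OF swm mv_m]) (simp add: comp_def)
    also have "\<dots> = distr (PiM UNIV \<mu>) (PiM UNIV (\<lambda>i. \<mu> (sw t i))) (\<lambda>\<omega>. \<lambda>n\<in>UNIV. \<omega> (sw t n))"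
      unfolding NM_Pi
      by (intro distr_cong) (auto simp: PK_def \<mu>_sets intro!: sets_PiM_cong)
    also have "\<dots> = PiM UNIV (\<lambda>i. \<mu> (sw t i))"
      using bij_sw[of t] \<mu>_prob by (intro distr_PiM_reindex) (auto simp: bij_def)
    also have "\<dots> = NM" unfolding NM_Pi \<mu>_sw ..
    finally show ?thesis .
  qed
  define T where "T = {1..D+1}"
  define K where "K t = {i. slotof i = t}" for t
  define hh where "hh t x m \<longleftrightarrow> (m (MA t) = 1 \<and> ennreal \<beta> \<le> sirf \<alpha> d t x m)" for t x m
  have hh_m: "(\<lambda>m. hh t x m) \<in> measurable (PiM I (\<lambda>_::mark_idx. borel::real measure)) (count_space UNIV)"
    if KI: "K t \<subseteq> I" for t x I
  proof -
    have [measurable]: "(\<lambda>m. sirf \<alpha> d t x m) \<in> borel_measurable (PiM I (\<lambda>_::mark_idx. borel::real measure))"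
      by (rule sirf_measurable[where xx="\<lambda>_. x" and mm="\<lambda>m. m"]) (use KI in \<open>auto simp: K_def\<close>)
    have [measurable]: "(\<lambda>m. m (MA t)) \<in> borel_measurable (PiM I (\<lambda>_::mark_idx. borel::real measure))"
      using KI by (intro measurable_component_singleton) (auto simp: K_def)
    show ?thesis unfolding hh_def by measurable
  qed
  have hh_sw: "hh t x m = hh 1 x (\<lambda>i. m (sw t i))" for t x m
    unfolding hh_def by (subst sirf_sw) (simp add: sws_def)
  have hh_restr: "hh t x (restrict m (K t)) = hh t x m" for t x m
  proof -
    have "sirf \<alpha> d t x (restrict m (K t)) = sirf \<alpha> d t x m"
      by (rule sirf_cong) (auto simp: K_def)
    then show ?thesis unfolding hh_def by (auto simp: K_def)
  qed
  have sets_hh: "{m. \<not> hh t x m} \<in> sets PK" for t x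
  proof -
    have "{m \<in> space PK. \<not> hh t x m} \<in> sets PK"
      using hh_m[of t UNIV x] unfolding PK_def by measurable
    then show ?thesis by simp
  qed
  have g_eq: "prob {\<omega> \<in> space M. \<not> hh t x (mv \<omega>)} = measure NM {m. \<not> hh 1 x m}" for t x
  proof -
    have m2: "(\<lambda>\<omega> i. mv \<omega> (sw t i)) \<in> measurable M PK"
      using measurable_comp[OF mv_m swm[of t]] by (simp add: comp_def)
    have "prob {\<omega> \<in> space M. \<not> hh t x (mv \<omega>)} = prob ((\<lambda>\<omega> i. mv \<omega> (sw t i)) -` {m. \<not> hh 1 x m} \<inter> space M)"
      by (subst hh_sw) (auto intro!: arg_cong[where f=prob])
    also have "\<dots> = measure (distr M PK (\<lambda>\<omega> i. mv \<omega> (sw t i))) {m. \<not> hh 1 x m}"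
      by (rule measure_distr[symmetric, OF m2 sets_hh])
    finally show ?thesis unfolding DE .
  qed
  have prodx: "prob {\<omega> \<in> space M. \<forall>t\<in>T. \<not> hh t x (mv \<omega>)} = (measure NM {m. \<not> hh 1 x m}) ^ (D+1)" for x
  proof -
    have ind1: "indep_vars (\<lambda>t. PiM (K t) (\<lambda>_. borel)) (\<lambda>t \<omega>. restrict (\<lambda>i. mk i \<omega>) (K t)) T"
      using indm unfolding mk_def[symmetric]
      by (rule indep_vars_restrict) (auto simp: K_def disjoint_family_on_def)
    have ind2: "indep_vars (\<lambda>_. count_space UNIV) (\<lambda>t \<omega>. \<not> hh t x (restrict (\<lambda>i. mk i \<omega>) (K t))) T"
      by (rule indep_vars_compose2[OF ind1, where Y="\<lambda>t r. \<not> hh t x r"]) (use hh_m in measurable)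
    have ind3: "indep_vars (\<lambda>_. count_space UNIV) (\<lambda>t \<omega>. \<not> hh t x (mv \<omega>)) T"
      using ind2 by (subst indep_vars_cong[OF refl _ refl]) (auto simp: hh_restr mv_def)
    have "prob (\<Inter>t\<in>T. (\<lambda>\<omega>. \<not> hh t x (mv \<omega>)) -` {True} \<inter> space M)
        = (\<Prod>t\<in>T. prob ((\<lambda>\<omega>. \<not> hh t x (mv \<omega>)) -` {True} \<inter> space M))"
      by (rule indep_varsD[OF ind3]) (auto simp: T_def)
    also have "(\<Inter>t\<in>T. (\<lambda>\<omega>. \<not> hh t x (mv \<omega>)) -` {True} \<inter> space M) = {\<omega> \<in> space M. \<forall>t\<in>T. \<not> hh t x (mv \<omega>)}"
      by (auto simp: T_def)
    also have "(\<Prod>t\<in>T. prob ((\<lambda>\<omega>. \<not> hh t x (mv \<omega>)) -` {True} \<inter> space M)) = (\<Prod>t\<in>T. measure NM {m. \<not> hh 1 x m})"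
    proof (rule prod.cong[OF refl])
      fix t show "prob ((\<lambda>\<omega>. \<not> hh t x (mv \<omega>)) -` {True} \<inter> space M) = measure NM {m. \<not> hh 1 x m}"
        using g_eq[of t x] by (simp add: vimage_def Int_def conj_commute)
    qed
    finally show ?thesis by (simp add: T_def)
  qed
  have sets_lt: "{m. sirf \<alpha> d 1 x m < ennreal \<beta>} \<in> sets PK" for x
  proof -
    have [measurable]: "(\<lambda>m. sirf \<alpha> d 1 x m) \<in> borel_measurable PK"
      unfolding PK_def by (rule sirf_measurable[where xx="\<lambda>_. x" and mm="\<lambda>m. m"]) auto
    have "{m \<in> space PK. sirf \<alpha> d 1 x m < ennreal \<beta>} \<in> sets PK" by measurable
    then show ?thesis by simp
  qed
  have A1: "mv \<omega> (MA 1) = 1 \<longleftrightarrow> A 1 \<omega>" for \<omega> by (simp add: mv_def mk_def mark_vec_def)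
  have A1m[measurable]: "A 1 \<in> measurable M (count_space UNIV)" using Ab by (simp add: bernoulli_rv_def)
  have pA: "prob {\<omega> \<in> space M. A 1 \<omega>} = p" using Ab by (simp add: bernoulli_rv_def)
  have pnA: "prob {\<omega> \<in> space M. \<not> A 1 \<omega>} = 1 - p"
  proof -
    have "{\<omega> \<in> space M. \<not> A 1 \<omega>} = space M - {\<omega> \<in> space M. A 1 \<omega>}" by auto
    moreover have "{\<omega> \<in> space M. A 1 \<omega>} \<in> events" by measurable
    ultimately show ?thesis using prob_compl[of "{\<omega> \<in> space M. A 1 \<omega>}"] pA by simp
  qed
  have g_dec: "measure NM {m. \<not> hh 1 x m} = (1 - p) + p * measure NM {m. sirf \<alpha> d 1 x m < ennreal \<beta>}" for x
  proof -
    define K' where "K' b = (if b then {MA 1} else {i. slotof i = 1 \<and> i \<noteq> MA 1})" for b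
    define Y where "Y b r = (if b then r (MA 1) = (1::real) else sirf \<alpha> d 1 x r < ennreal \<beta>)" for b r
    have ind1: "indep_vars (\<lambda>b. PiM (K' b) (\<lambda>_. borel)) (\<lambda>b \<omega>. restrict (\<lambda>i. mk i \<omega>) (K' b)) UNIV"
      using indm unfolding mk_def[symmetric]
      by (rule indep_vars_restrict) (auto simp: K'_def disjoint_family_on_def)
    have Ym: "Y b \<in> measurable (PiM (K' b) (\<lambda>_. borel)) (count_space UNIV)" for b
    proof (cases b)
      case True
      have [measurable]: "(\<lambda>r. r (MA 1)) \<in> borel_measurable (PiM (K' b) (\<lambda>_::mark_idx. borel::real measure))"
        using True by (intro measurable_component_singleton) (auto simp: K'_def)
      have "Y b = (\<lambda>r. r (MA 1) = (1::real))" using True by (simp add: Y_def fun_eq_iff)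
      then show ?thesis by (simp only:) measurable
    next
      case False
      have [measurable]: "(\<lambda>m. sirf \<alpha> d 1 x m) \<in> borel_measurable (PiM (K' b) (\<lambda>_::mark_idx. borel::real measure))"
        by (rule sirf_measurable[where xx="\<lambda>_. x" and mm="\<lambda>m. m"]) (use False in \<open>auto simp: K'_def\<close>)
      have "Y b = (\<lambda>r. sirf \<alpha> d 1 x r < ennreal \<beta>)" using False by (simp add: Y_def fun_eq_iff)
      then show ?thesis by (simp only:) measurable
    qed
    have ind2: "indep_vars (\<lambda>_. count_space UNIV) (\<lambda>b \<omega>. Y b (restrict (\<lambda>i. mk i \<omega>) (K' b))) UNIV"
      by (rule indep_vars_compose2[OF ind1]) (rule Ym)
    have Yr: "Y b (restrict (\<lambda>i. mk i \<omega>) (K' b)) = (if b then A 1 \<omega> else sirf \<alpha> d 1 x (mv \<omega>) < ennreal \<beta>)" for b \<omega>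
    proof (cases b)
      case True then show ?thesis using A1[of \<omega>] by (simp add: Y_def K'_def mv_def)
    next
      case False
      have "sirf \<alpha> d 1 x (restrict (\<lambda>i. mk i \<omega>) (K' b)) = sirf \<alpha> d 1 x (mv \<omega>)"
        by (rule sirf_cong) (use False in \<open>auto simp: K'_def mv_def\<close>)
      then show ?thesis using False by (simp add: Y_def)
    qed
    have ind3: "indep_vars (\<lambda>_. count_space UNIV) (\<lambda>b \<omega>. if b then A 1 \<omega> else sirf \<alpha> d 1 x (mv \<omega>) < ennreal \<beta>) UNIV"
      using ind2 by (subst indep_vars_cong[OF refl _ refl]) (auto simp: Yr)
    have "prob (\<Inter>b\<in>UNIV. (\<lambda>\<omega>. if b then A 1 \<omega> else sirf \<alpha> d 1 x (mv \<omega>) < ennreal \<beta>) -` {True} \<inter> space M)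
      = (\<Prod>b\<in>UNIV. prob ((\<lambda>\<omega>. if b then A 1 \<omega> else sirf \<alpha> d 1 x (mv \<omega>) < ennreal \<beta>) -` {True} \<inter> space M))"
      by (rule indep_varsD[OF ind3]) auto
    then have pind: "prob {\<omega> \<in> space M. A 1 \<omega> \<and> sirf \<alpha> d 1 x (mv \<omega>) < ennreal \<beta>}
        = p * prob {\<omega> \<in> space M. sirf \<alpha> d 1 x (mv \<omega>) < ennreal \<beta>}"
      unfolding UNIV_bool using pA by (simp add: vimage_def Int_def conj_commute conj_left_commute)
    have ms: "prob {\<omega> \<in> space M. sirf \<alpha> d 1 x (mv \<omega>) < ennreal \<beta>} = measure NM {m. sirf \<alpha> d 1 x m < ennreal \<beta>}"
      unfolding NM_def by (subst measure_distr[OF mv_m sets_lt]) (auto intro!: arg_cong[where f=prob])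
    have ev1: "{\<omega> \<in> space M. \<not> A 1 \<omega>} \<in> events" by measurable
    have ev2: "{\<omega> \<in> space M. A 1 \<omega> \<and> sirf \<alpha> d 1 x (mv \<omega>) < ennreal \<beta>} \<in> events"
    proof -
      have "mv -` {m. sirf \<alpha> d 1 x m < ennreal \<beta>} \<inter> space M \<in> events"
        using sets_lt mv_m by (rule measurable_sets[rotated])
      moreover have "{\<omega> \<in> space M. A 1 \<omega>} \<in> events" by measurable
      ultimately have "{\<omega> \<in> space M. A 1 \<omega>} \<inter> (mv -` {m. sirf \<alpha> d 1 x m < ennreal \<beta>} \<inter> space M) \<in> events" by auto
      also have "{\<omega> \<in> space M. A 1 \<omega>} \<inter> (mv -` {m. sirf \<alpha> d 1 x m < ennreal \<beta>} \<inter> space M) = {\<omega> \<in> space M. A 1 \<omega> \<and> sirf \<alpha> d 1 x (mv \<omega>) < ennreal \<beta>}" by auto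
      finally show ?thesis .
    qed
    have "measure NM {m. \<not> hh 1 x m} = prob {\<omega> \<in> space M. \<not> hh 1 x (mv \<omega>)}"
      using g_eq[of 1 x] by simp
    also have "{\<omega> \<in> space M. \<not> hh 1 x (mv \<omega>)} = {\<omega> \<in> space M. \<not> A 1 \<omega>} \<union> {\<omega> \<in> space M. A 1 \<omega> \<and> sirf \<alpha> d 1 x (mv \<omega>) < ennreal \<beta>}"
      using A1 by (auto simp: hh_def not_le)
    also have "prob \<dots> = prob {\<omega> \<in> space M. \<not> A 1 \<omega>} + prob {\<omega> \<in> space M. A 1 \<omega> \<and> sirf \<alpha> d 1 x (mv \<omega>) < ennreal \<beta>}"
      by (rule finite_measure_Union[OF ev1 ev2]) auto
    finally show ?thesis using pnA pind ms by simp
  qed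
  have SIR_eq: "SIR \<alpha> d X Ind G H t \<omega> = sirf \<alpha> d t (Xv \<omega>) (mv \<omega>)" for t \<omega>
    by (simp add: SIR_def interference_def sirf_def Xv_def mv_def mk_def mark_vec_def)
  have At: "mv \<omega> (MA t) = 1 \<longleftrightarrow> A t \<omega>" for t \<omega> by (simp add: mv_def mk_def mark_vec_def)
  have sirf_jm[measurable]: "(\<lambda>z. sirf \<alpha> d t (fst z) (snd z)) \<in> borel_measurable (PX \<Otimes>\<^sub>M PK)" for t
    by (rule sirf_measurable) (auto simp: PX_def PK_def)
  have MA_jm[measurable]: "(\<lambda>z. snd z (MA t)) \<in> borel_measurable (PX \<Otimes>\<^sub>M PK)" for t
    by (auto simp: PK_def)
  define C where "C = {z \<in> space (PX \<Otimes>\<^sub>M PK). \<forall>t\<in>T. \<not> hh t (fst z) (snd z)}"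
  define C1 where "C1 = {z \<in> space (PX \<Otimes>\<^sub>M PK). \<not> hh 1 (fst z) (snd z)}"
  define C2 where "C2 = {z \<in> space (PX \<Otimes>\<^sub>M PK). sirf \<alpha> d 1 (fst z) (snd z) < ennreal \<beta>}"
  have finT: "finite T" by (simp add: T_def)
  have C_s: "C \<in> sets (PX \<Otimes>\<^sub>M PK)" unfolding C_def hh_def using finT by measurable
  have C1_s: "C1 \<in> sets (PX \<Otimes>\<^sub>M PK)" unfolding C1_def hh_def by measurable
  have C2_s: "C2 \<in> sets (PX \<Otimes>\<^sub>M PK)" unfolding C2_def by measurable
  have spP: "space (PX \<Otimes>\<^sub>M PK) = UNIV" by (simp add: space_pair_measure)
  define g where "g x = measure NM {m. \<not> hh 1 x m}" for x
  define r where "r x = measure NM {m. sirf \<alpha> d 1 x m < ennreal \<beta>}" for x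
  have g_m[measurable]: "g \<in> borel_measurable NX"
  proof -
    have "g = (\<lambda>x. measure NM (Pair x -` C1))" by (auto simp: g_def C1_def spP fun_eq_iff)
    then show ?thesis using secm[OF C1_s] by simp
  qed
  have r_m[measurable]: "r \<in> borel_measurable NX"
  proof -
    have "r = (\<lambda>x. measure NM (Pair x -` C2))" by (auto simp: r_def C2_def spP fun_eq_iff)
    then show ?thesis using secm[OF C2_s] by simp
  qed
  have int_r: "(\<integral>x. r x \<partial>NX) = prob {\<omega> \<in> space M. SIR \<alpha> d X Ind G H 1 \<omega> < ennreal \<beta>}"
  proof -
    have "prob {\<omega> \<in> space M. (Xv \<omega>, mv \<omega>) \<in> C2} = (\<integral>x. measure NM (Pair x -` C2) \<partial>NX)"
      by (rule fub[OF C2_s])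
    also have "(\<lambda>x. measure NM (Pair x -` C2)) = r" by (auto simp: r_def C2_def spP fun_eq_iff)
    finally show ?thesis by (simp add: C2_def spP SIR_eq)
  qed
  have int_g: "(\<integral>x. g x \<partial>NX) = p * prob {\<omega> \<in> space M. SIR \<alpha> d X Ind G H 1 \<omega> < ennreal \<beta>} + 1 - p"
  proof -
    have ir: "integrable NX r"
      by (intro NX.integrable_const_bound[where B=1]) (auto simp: r_def)
    have "(\<integral>x. g x \<partial>NX) = (\<integral>x. (1 - p) + p * r x \<partial>NX)"
      unfolding g_def r_def g_dec ..
    also have "\<dots> = (1 - p) + p * (\<integral>x. r x \<partial>NX)"
      using ir by (simp add: NX.prob_space)
    finally show ?thesis using int_r by simp
  qed
  have int_C: "prob {\<omega> \<in> space M. (Xv \<omega>, mv \<omega>) \<in> C} = (\<integral>x. g x ^ (D+1) \<partial>NX)"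
  proof -
    have "prob {\<omega> \<in> space M. (Xv \<omega>, mv \<omega>) \<in> C} = (\<integral>x. measure NM (Pair x -` C) \<partial>NX)"
      by (rule fub[OF C_s])
    also have "(\<lambda>x. measure NM (Pair x -` C)) = (\<lambda>x. g x ^ (D+1))"
    proof
      fix x
      have ps: "Pair x -` C \<in> sets PK" using C_s by (rule sets_Pair1)
      have "measure NM (Pair x -` C) = prob (mv -` (Pair x -` C) \<inter> space M)"
        unfolding NM_def by (rule measure_distr[OF mv_m ps])
      also have "mv -` (Pair x -` C) \<inter> space M = {\<omega> \<in> space M. \<forall>t\<in>T. \<not> hh t x (mv \<omega>)}"
        by (auto simp: C_def spP)
      finally show "measure NM (Pair x -` C) = g x ^ (D+1)" using prodx by (simp add: g_def)
    qed
    finally show ?thesis .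
  qed
  have gb: "0 \<le> g x \<and> g x \<le> 1" for x by (simp add: g_def)
  have "(\<integral>x. g x \<partial>NX) ^ (D+1) \<le> (\<integral>x. g x ^ (D+1) \<partial>NX)"
    by (rule NX.pow_expectation_le[OF g_m gb])
  then have le: "(p * prob {\<omega> \<in> space M. SIR \<alpha> d X Ind G H 1 \<omega> < ennreal \<beta>} + 1 - p) ^ (D+1)
      \<le> prob {\<omega> \<in> space M. (Xv \<omega>, mv \<omega>) \<in> C}"
    using int_g int_C by simp
  have evC: "{\<omega> \<in> space M. (Xv \<omega>, mv \<omega>) \<in> C} \<in> events"
  proof -
    have "(\<lambda>\<omega>. (Xv \<omega>, mv \<omega>)) -` C \<inter> space M \<in> events"
      using C_s by (rule measurable_sets[rotated]) simp
    then show ?thesis by (simp add: vimage_def Int_def conj_commute)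
  qed
  have "{\<omega> \<in> space M. \<exists>t \<in> {1..D+1}. A t \<omega> \<and> SIR \<alpha> d X Ind G H t \<omega> \<ge> ennreal \<beta>}
      = space M - {\<omega> \<in> space M. (Xv \<omega>, mv \<omega>) \<in> C}"
    by (auto simp: C_def spP T_def hh_def SIR_eq At)
  then have "prob {\<omega> \<in> space M. \<exists>t \<in> {1..D+1}. A t \<omega> \<and> SIR \<alpha> d X Ind G H t \<omega> \<ge> ennreal \<beta>}
      = 1 - prob {\<omega> \<in> space M. (Xv \<omega>, mv \<omega>) \<in> C}"
    using prob_compl[OF evC] by simp
  then show ?thesis using le by simp
qed

end
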